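(* Let $\mathcal S$ be a nonempty set of vertices and $o$ a vertex such that at least one $c\in\mathcal S$ has a directed path to $o$. Let $\delta_{\min}=\min_{c\in\mathcal S}\delta_{co}$. Assume the open loop $M(s)$ is strictly proper with relative degree $\chi=\deg(ap)-\deg(bq)\ge1$. Then the transfer function $$T_{\mathcal S o}(s)=e_o^T\big(I+M(s)L\big)^{-1}M(s)\sum_{c\in\mathcal S}e_c,$$ from a common input fed to all nodes of $\mathcal S$ to $y_o$, has relative degree $(\delta_{\min}+1)\chi$.
   Context: $\mathcal G$ is a weighted directed graph on $\{1,\dots,N\}$ with adjacency matrix $A=[a_{ij}]$. Here $a_{ij}>0$ if there is an arc from $j$ to $i$ and $a_{ij}=0$ otherwise (no self-loops). The Laplacian is $L=D-A$ with $D=\mathrm{diag}(\sum_j a_{ij})$. A directed path from $u$ to $w$ is a sequence of distinct vertices $u=v_0,\dots,v_\ell=w$ with an arc from $v_k$ to $v_{k+1}$ for each $k$, and $\ell$ is its length. $\delta_{uw}$ is the length of a shortest directed path from $u$ to $w$; it is $\infty$ if none exists. $e_i$ is the $i$-th canonical basis vector. $a,b,p,q$ are nonzero real polynomials and $M(s)=\frac{b(s)q(s)}{a(s)p(s)}$. The relative degree of a rational function is the degree of its denominator minus the degree of its numerator. *)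

theory Defs
  imports "HOL-Computational_Algebra.Polynomial" "HOL-Computational_Algebra.Fraction_Field"
          "HOL-Library.Extended_Nat"
          "Jordan_Normal_Form.Gauss_Jordan_Elimination"
begin

text \<open>Vertices are 0..<N (the paper uses 1..N). The adjacency matrix is a function
  A :: nat => nat => real; A i j > 0 iff there is an arc from j to i.\<close>

definition arc :: "(nat \<Rightarrow> nat \<Rightarrow> real) \<Rightarrow> nat \<Rightarrow> nat \<Rightarrow> bool" where
  "arc A j i \<longleftrightarrow> A i j > 0"

text \<open>A directed path given as its list of vertices v0, ..., vl (distinct), length l = length - 1.\<close>
definition is_dpath :: "nat \<Rightarrow> (nat \<Rightarrow> nat \<Rightarrow> real) \<Rightarrow> nat list \<Rightarrow> bool" where
  "is_dpath N A vs \<longleftrightarrow> vs \<noteq> [] \<and> distinct vs \<and> set vs \<subseteq> {..<N} \<and>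
     (\<forall>k. Suc k < length vs \<longrightarrow> arc A (vs ! k) (vs ! Suc k))"

definition dist_path :: "nat \<Rightarrow> (nat \<Rightarrow> nat \<Rightarrow> real) \<Rightarrow> nat \<Rightarrow> nat \<Rightarrow> enat" where
  "dist_path N A u w = Inf {enat (length vs - 1) | vs. is_dpath N A vs \<and> hd vs = u \<and> last vs = w}"

definition laplacian :: "nat \<Rightarrow> (nat \<Rightarrow> nat \<Rightarrow> real) \<Rightarrow> real mat" where
  "laplacian N A = mat N N (\<lambda>(i,j). (if i = j then (\<Sum>k<N. A i k) else 0) - A i j)"

type_synonym ratfun = "real poly fract"

definition const_rf :: "real \<Rightarrow> ratfun" where
  "const_rf x = Fract [:x:] 1"

text \<open>Relative degree: degree of denominator minus degree of numerator
  (independent of the chosen representation; meaningful for nonzero r).\<close>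
definition rel_degree :: "ratfun \<Rightarrow> int" where
  "rel_degree r = (THE d. \<exists>n m. m \<noteq> 0 \<and> n \<noteq> 0 \<and> r = Fract n m \<and>
                         d = int (degree m) - int (degree n))"

end

theory Submission imports Defs "Jordan_Normal_Form.Determinant" begin

lemma rel_degree_Fract:
  assumes "n \<noteq> 0" "d \<noteq> 0"
  shows "rel_degree (Fract n d) = int (degree d) - int (degree n)"
  unfolding rel_degree_def
proof (rule the_equality)
  show "\<exists>n' m. m \<noteq> 0 \<and> n' \<noteq> 0 \<and> Fract n d = Fract n' m \<and>
          int (degree d) - int (degree n) = int (degree m) - int (degree n')"
    using assms by blast
next
  fix e assume "\<exists>n' m. m \<noteq> 0 \<and> n' \<noteq> 0 \<and> Fract n d = Fract n' m \<and>
          e = int (degree m) - int (degree n')"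
  then obtain n' m where h: "m \<noteq> 0" "n' \<noteq> 0" "Fract n d = Fract n' m"
     "e = int (degree m) - int (degree n')" by blast
  have "n * m = n' * d" using h assms eq_fract(1) by blast
  hence "degree (n*m) = degree (n'*d)" by simp
  hence "degree n + degree m = degree n' + degree d" using h assms by (simp add: degree_mult_eq)
  thus "e = int (degree d) - int (degree n)" using h by simp
qed

definition vge :: "ratfun \<Rightarrow> int \<Rightarrow> bool" where
  "vge r k \<longleftrightarrow> r = 0 \<or> rel_degree r \<ge> k"

lemma Fract_eq0: "d \<noteq> 0 \<Longrightarrow> Fract n d = 0 \<longleftrightarrow> n = 0"
  by (simp add: Zero_fract_def eq_fract)

lemma vge_Fract:
  assumes "d \<noteq> 0"
  shows "vge (Fract n d) k \<longleftrightarrow> n = 0 \<or> int (degree n) + k \<le> int (degree d)"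
  using assms by (cases "n = 0") (auto simp: vge_def Fract_eq0 rel_degree_Fract)

lemma vge_mono: "vge r k \<Longrightarrow> k' \<le> k \<Longrightarrow> vge r k'"
  by (auto simp: vge_def)

lemma vge_zero[simp]: "vge 0 k" by (simp add: vge_def)

lemma vge_add:
  assumes "vge r k" "vge s k" shows "vge (r + s) k"
proof -
  obtain n1 d1 where r: "r = Fract n1 d1" "d1 \<noteq> 0" by (cases r)
  obtain n2 d2 where s: "s = Fract n2 d2" "d2 \<noteq> 0" by (cases s)
  have h1: "n1 = 0 \<or> int (degree n1) + k \<le> int (degree d1)" using assms(1) r vge_Fract by blast
  have h2: "n2 = 0 \<or> int (degree n2) + k \<le> int (degree d2)" using assms(2) s vge_Fract by blast
  have "r + s = Fract (n1 * d2 + n2 * d1) (d1 * d2)" using r s by simp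
  moreover have "n1 * d2 + n2 * d1 = 0 \<or> int (degree (n1 * d2 + n2 * d1)) + k \<le> int (degree (d1 * d2))"
  proof -
    have a: "n1 = 0 \<or> int (degree (n1 * d2)) + k \<le> int (degree (d1 * d2))"
      using h1 r s by (cases "n1 = 0") (auto simp: degree_mult_eq)
    have b: "n2 = 0 \<or> int (degree (n2 * d1)) + k \<le> int (degree (d1 * d2))"
      using h2 r s by (cases "n2 = 0") (auto simp: degree_mult_eq)
    have "degree (n1 * d2 + n2 * d1) \<le> max (degree (n1 * d2)) (degree (n2 * d1))"
      by (rule degree_add_le_max)
    thus ?thesis using a b by auto
  qed
  ultimately show ?thesis using r s by (simp add: vge_Fract)
qed

lemma vge_uminus: "vge r k \<Longrightarrow> vge (- r) k"
  by (cases r) (auto simp: vge_Fract)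

lemma vge_diff: "vge r k \<Longrightarrow> vge s k \<Longrightarrow> vge (r - s) k"
  using vge_add[of r k "-s"] vge_uminus by simp

lemma vge_mult:
  assumes "vge r k" "vge s l" shows "vge (r * s) (k + l)"
proof -
  obtain n1 d1 where r: "r = Fract n1 d1" "d1 \<noteq> 0" by (cases r)
  obtain n2 d2 where s: "s = Fract n2 d2" "d2 \<noteq> 0" by (cases s)
  have h1: "n1 = 0 \<or> int (degree n1) + k \<le> int (degree d1)" using assms(1) r vge_Fract by blast
  have h2: "n2 = 0 \<or> int (degree n2) + l \<le> int (degree d2)" using assms(2) s vge_Fract by blast
  show ?thesis using r s h1 h2 by (cases "n1 = 0"; cases "n2 = 0") (auto simp: vge_Fract degree_mult_eq)
qed

lemma vge_sum: "finite I \<Longrightarrow> (\<And>i. i \<in> I \<Longrightarrow> vge (f i) k) \<Longrightarrow> vge (sum f I) k"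
  by (induction I rule: finite_induct) (auto intro: vge_add)

lemma vge_const: "vge (const_rf c) 0"
  by (simp add: const_rf_def vge_Fract)

lemma vge_rel: "vge r (rel_degree r)" by (simp add: vge_def)

lemma vge_nz: "vge r k \<Longrightarrow> r \<noteq> 0 \<Longrightarrow> rel_degree r \<ge> k" by (simp add: vge_def)

lemma rel_degree_mult:
  assumes "r \<noteq> 0" "s \<noteq> 0" shows "r * s \<noteq> 0 \<and> rel_degree (r * s) = rel_degree r + rel_degree s"
proof -
  obtain n1 d1 where r: "r = Fract n1 d1" "d1 \<noteq> 0" "n1 \<noteq> 0" using assms(1) by (cases r rule: Fract_cases_nonzero) auto
  obtain n2 d2 where s: "s = Fract n2 d2" "d2 \<noteq> 0" "n2 \<noteq> 0" using assms(2) by (cases s rule: Fract_cases_nonzero) auto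
  show ?thesis using r s by (simp add: rel_degree_Fract Fract_eq0 degree_mult_eq)
qed

lemma rel_degree_power:
  assumes "r \<noteq> 0" shows "r ^ n \<noteq> 0 \<and> rel_degree (r ^ n) = int n * rel_degree r"
proof (induction n)
  case 0
  have "rel_degree (Fract 1 1) = 0" by (simp add: rel_degree_Fract)
  then show ?case by (simp add: fract_collapse)
next
  case (Suc n)
  then show ?case using rel_degree_mult[OF assms, of "r^n"] by (simp add: algebra_simps)
qed

lemma rel_degree_uminus: "rel_degree (- r) = rel_degree r"
proof (cases r rule: Fract_cases_nonzero)
  case (Fract a b) thus ?thesis by (simp add: rel_degree_Fract)
next
  case 0 thus ?thesis by simp
qed

lemma rel_degree_sign: "rel_degree ((-1)^k * r) = rel_degree r"
  by (induction k) (auto simp: rel_degree_uminus)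

lemma rel_degree_const: "c \<noteq> 0 \<Longrightarrow> const_rf c \<noteq> 0 \<and> rel_degree (const_rf c) = 0"
  by (simp add: const_rf_def rel_degree_Fract Fract_eq0)

lemma vge_strict:
  assumes "r \<noteq> 0" "vge s k" "k > rel_degree r"
  shows "r + s \<noteq> 0 \<and> rel_degree (r + s) = rel_degree r"
proof (cases "s = 0")
  case True thus ?thesis using assms by simp
next
  case False
  obtain n1 d1 where r: "r = Fract n1 d1" "d1 \<noteq> 0" "n1 \<noteq> 0" using assms(1) by (cases r rule: Fract_cases_nonzero) auto
  obtain n2 d2 where s: "s = Fract n2 d2" "d2 \<noteq> 0" "n2 \<noteq> 0" using False by (cases s rule: Fract_cases_nonzero) auto
  have "rel_degree s \<ge> k" using assms(2) False vge_nz by blast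
  hence "int (degree d2) - int (degree n2) > int (degree d1) - int (degree n1)"
    using assms(3) r s by (simp add: rel_degree_Fract)
  hence lt: "degree (n2 * d1) < degree (n1 * d2)" using r s by (simp add: degree_mult_eq)
  hence dg: "degree (n1 * d2 + n2 * d1) = degree (n1 * d2)" by (rule degree_add_eq_left)
  have nz: "n1 * d2 + n2 * d1 \<noteq> 0"
  proof
    assume "n1 * d2 + n2 * d1 = 0"
    hence "n1 * d2 = - (n2 * d1)" by (simp add: eq_neg_iff_add_eq_0)
    hence "degree (n1*d2) = degree (n2*d1)" by simp
    thus False using lt by simp
  qed
  have "r + s = Fract (n1 * d2 + n2 * d1) (d1 * d2)" using r s by simp
  thus ?thesis using nz dg r s by (simp add: rel_degree_Fract Fract_eq0 degree_mult_eq)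
qed

lemma const_rf_add: "const_rf (x + y) = const_rf x + const_rf y"
  by (simp add: const_rf_def)
lemma const_rf_mult: "const_rf (x * y) = const_rf x * const_rf y"
  by (simp add: const_rf_def mult.commute)
lemma const_rf_0[simp]: "const_rf 0 = 0"
  by (simp add: const_rf_def Zero_fract_def)
lemma const_rf_1[simp]: "const_rf 1 = 1"
  by (simp add: const_rf_def One_fract_def one_pCons)
lemma const_rf_uminus: "const_rf (- x) = - const_rf x"
  by (simp add: const_rf_def)
lemma const_rf_sum: "const_rf (sum f I) = (\<Sum>i\<in>I. const_rf (f i))"
  by (induction I rule: infinite_finite_induct) (auto simp: const_rf_add)


lemma bound:
  fixes m :: ratfun and Lc :: "nat \<Rightarrow> nat \<Rightarrow> ratfun" and w f :: "nat \<Rightarrow> ratfun"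
  assumes m1: "vge m 1" and Lc0: "\<And>i l. vge (Lc i l) 0" and fe: "\<And>i. i < N \<Longrightarrow> vge (f i) e"
    and eq: "\<And>i. i < N \<Longrightarrow> w i + m * (\<Sum>l<N. Lc i l * w l) = f i"
  shows "\<forall>i<N. vge (w i) e"
proof (rule ccontr)
  assume "\<not> (\<forall>i<N. vge (w i) e)"
  then obtain i0 where i0: "i0 < N" "\<not> vge (w i0) e" by blast
  define W where "W = {i. i < N \<and> w i \<noteq> 0}"
  have i0W: "i0 \<in> W" using i0 by (auto simp: W_def)
  have finW: "finite W" by (auto simp: W_def)
  define \<mu> where "\<mu> = Min ((\<lambda>i. rel_degree (w i)) ` W)"
  have "\<mu> \<in> (\<lambda>i. rel_degree (w i)) ` W"
    using finW i0W unfolding \<mu>_def by (intro Min_in) auto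
  then obtain j where j: "j \<in> W" "rel_degree (w j) = \<mu>" by auto
  have allmu: "vge (w l) \<mu>" if "l < N" for l
  proof (cases "w l = 0")
    case False
    hence "l \<in> W" using that by (auto simp: W_def)
    hence "\<mu> \<le> rel_degree (w l)" unfolding \<mu>_def using finW by simp
    thus ?thesis by (simp add: vge_def)
  qed simp
  have jN: "j < N" "w j \<noteq> 0" using j by (auto simp: W_def)
  have "vge (\<Sum>l<N. Lc j l * w l) (0 + \<mu>)"
    by (rule vge_sum) (use vge_mult[OF Lc0 allmu] in auto)
  hence ms: "vge (m * (\<Sum>l<N. Lc j l * w l)) (1 + \<mu>)"
    using vge_mult[OF m1] by simp
  have wj: "w j = f j - m * (\<Sum>l<N. Lc j l * w l)" using eq[OF jN(1)] by (simp add: algebra_simps)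
  show False
  proof (cases "e \<le> 1 + \<mu>")
    case True
    hence "vge (w j) e" unfolding wj by (intro vge_diff fe jN vge_mono[OF ms])
    hence "e \<le> \<mu>" using vge_nz jN j by fastforce
    hence "vge (w i0) e" using allmu[OF i0(1)] vge_mono by blast
    thus False using i0 by simp
  next
    case False
    hence "vge (w j) (1 + \<mu>)" unfolding wj
      by (intro vge_diff ms vge_mono[OF fe[OF jN(1)]]) simp
    hence "1 + \<mu> \<le> \<mu>" using vge_nz jN j by fastforce
    thus False by simp
  qed
qed

lemma iter:
  fixes m :: ratfun and w :: "nat \<Rightarrow> ratfun" and z :: "nat \<Rightarrow> nat \<Rightarrow> real" and lap :: "nat \<Rightarrow> nat \<Rightarrow> real"
  assumes mnz: "m \<noteq> 0" and mdeg: "rel_degree m = \<chi>" and chi1: "\<chi> \<ge> 1"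
    and zS: "\<And>k i. z (Suc k) i = (\<Sum>l<N. lap i l * z k l)"
    and eq: "\<And>i. i < N \<Longrightarrow> w i + m * (\<Sum>l<N. const_rf (lap i l) * w l) = m * const_rf (z 0 i)"
  shows "\<forall>i<N. vge (w i - (\<Sum>k<K. (-1)^k * m^(k+1) * const_rf (z k i))) ((int K + 1) * \<chi>)"
proof (induction K)
  case 0
  have m1: "vge m 1" using mdeg chi1 by (simp add: vge_def)
  have "\<forall>i<N. vge (w i) \<chi>"
  proof (rule bound[OF m1 _ _ eq])
    show "vge (const_rf (lap i l)) 0" for i l by (rule vge_const)
    show "vge (m * const_rf (z 0 i)) \<chi>" for i
      using vge_mult[OF _ vge_const, of m \<chi>] mdeg by (simp add: vge_def)
  qed
  thus ?case by simp
next
  case (Suc K)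
  define g where "g k i = (-1)^k * m^(k+1) * const_rf (z k i)" for k i
  have gS: "g (Suc k) i = - m * (\<Sum>l<N. const_rf (lap i l) * g k l)" for k i
    unfolding g_def zS const_rf_sum const_rf_mult
    by (simp add: sum_distrib_left sum_distrib_right algebra_simps)
  have IH: "\<forall>i<N. vge (w i - (\<Sum>k<K. g k i)) ((int K + 1) * \<chi>)" using Suc g_def by simp
  show ?case
  proof (intro allI impI)
    fix i assume i: "i < N"
    have "(\<Sum>k<Suc K. g k i) = g 0 i + (\<Sum>k<K. g (Suc k) i)" by (rule sum.lessThan_Suc_shift)
    also have "(\<Sum>k<K. g (Suc k) i) = - m * (\<Sum>l<N. const_rf (lap i l) * (\<Sum>k<K. g k l))"
      unfolding gS sum_distrib_left
      by (subst sum.swap) (simp add: sum_negf)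
    finally have s: "(\<Sum>k<Suc K. g k i) = m * const_rf (z 0 i) - m * (\<Sum>l<N. const_rf (lap i l) * (\<Sum>k<K. g k l))"
      by (simp add: g_def)
    have d: "(\<Sum>l<N. const_rf (lap i l) * (w l - (\<Sum>k<K. g k l))) =
       (\<Sum>l<N. const_rf (lap i l) * w l) - (\<Sum>l<N. const_rf (lap i l) * (\<Sum>k<K. g k l))"
      by (simp add: right_diff_distrib sum_subtractf)
    have wi: "w i = m * const_rf (z 0 i) - m * (\<Sum>l<N. const_rf (lap i l) * w l)"
      using eq[OF i] by (simp add: algebra_simps)
    have "w i - (\<Sum>k<Suc K. g k i) = - m * (\<Sum>l<N. const_rf (lap i l) * (w l - (\<Sum>k<K. g k l)))"
      unfolding s d by (subst wi) (simp add: algebra_simps)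
    moreover have "vge (- m * (\<Sum>l<N. const_rf (lap i l) * (w l - (\<Sum>k<K. g k l)))) (\<chi> + (0 + (int K + 1) * \<chi>))"
      by (intro vge_mult vge_sum vge_const) (use IH mdeg in \<open>auto simp: vge_def rel_degree_uminus\<close>)
    moreover have "(int (Suc K) + 1) * \<chi> = \<chi> + (0 + (int K + 1) * \<chi>)" by (simp add: algebra_simps)
    ultimately have "vge (w i - (\<Sum>k<Suc K. g k i)) ((int (Suc K) + 1) * \<chi>)"
      by metis
    thus "vge (w i - (\<Sum>k<Suc K. (-1)^k * m^(k+1) * const_rf (z k i))) ((int (Suc K) + 1) * \<chi>)"
      by (simp add: g_def)
  qed
qed


lemma dist_le:
  "is_dpath N A vs \<Longrightarrow> hd vs = j \<Longrightarrow> last vs = i \<Longrightarrow> dist_path N A j i \<le> enat (length vs - 1)"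
  unfolding dist_path_def by (rule Inf_lower) blast

lemma dist_attain:
  assumes "dist_path N A j i \<noteq> \<infinity>"
  shows "\<exists>vs. is_dpath N A vs \<and> hd vs = j \<and> last vs = i \<and> dist_path N A j i = enat (length vs - 1)"
proof -
  let ?X = "{enat (length vs - 1) | vs. is_dpath N A vs \<and> hd vs = j \<and> last vs = i}"
  have ne: "?X \<noteq> {}"
  proof
    assume e: "?X = {}"
    have "dist_path N A j i = Inf ?X" unfolding dist_path_def ..
    also have "\<dots> = \<infinity>" unfolding e by (simp add: Inf_enat_def)
    finally show False using assms by simp
  qed
  have "\<exists>x. x \<in> ?X" using ne by blast
  hence L: "(LEAST x. x \<in> ?X) \<in> ?X" by (rule LeastI_ex)
  have "Inf ?X = (LEAST x. x \<in> ?X)" unfolding Inf_enat_def by (rule if_not_P[OF ne])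
  hence "Inf ?X \<in> ?X" using L by simp
  thus ?thesis unfolding dist_path_def by auto
qed

lemma dpath_take:
  assumes "is_dpath N A vs" "0 < n" "n \<le> length vs"
  shows "is_dpath N A (take n vs)" "hd (take n vs) = hd vs" "last (take n vs) = vs ! (n - 1)"
proof -
  show "is_dpath N A (take n vs)"
    using assms unfolding is_dpath_def
    by (auto dest: in_set_takeD simp: distinct_take)
  show "hd (take n vs) = hd vs" using assms by (cases vs) (auto simp: is_dpath_def)
  show "last (take n vs) = vs ! (n - 1)" using assms by (simp add: last_conv_nth is_dpath_def)
qed

lemma dist_zero:
  assumes "j < N" shows "dist_path N A j i = 0 \<longleftrightarrow> i = j"
proof
  assume "dist_path N A j i = 0"
  then obtain vs where vs: "is_dpath N A vs" "hd vs = j" "last vs = i" "length vs - 1 = 0"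
    using dist_attain[of N A j i] by (auto simp: zero_enat_def)
  hence "length vs = 1" by (cases vs) (auto simp: is_dpath_def)
  then obtain x where "vs = [x]" by (cases vs) auto
  thus "i = j" using vs by simp
next
  assume "i = j"
  have "is_dpath N A [j]" using assms by (simp add: is_dpath_def)
  hence "dist_path N A j i \<le> 0" using dist_le[of N A "[j]" j i] \<open>i = j\<close> by (simp add: zero_enat_def)
  thus "dist_path N A j i = 0" by simp
qed

lemma dist_tri:
  assumes "l < N" "i < N" "A i l > 0"
  shows "dist_path N A j i \<le> dist_path N A j l + 1"
proof (cases "dist_path N A j l = \<infinity>")
  case True thus ?thesis by simp
next
  case False
  then obtain vs where vs: "is_dpath N A vs" "hd vs = j" "last vs = l" "dist_path N A j l = enat (length vs - 1)"
    using dist_attain by blast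
  have vne: "vs \<noteq> []" using vs by (simp add: is_dpath_def)
  show ?thesis
  proof (cases "i \<in> set vs")
    case True
    then obtain n where n: "n < length vs" "vs ! n = i" by (auto simp: in_set_conv_nth)
    have "dist_path N A j i \<le> enat (length (take (Suc n) vs) - 1)"
      using dpath_take[OF vs(1), of "Suc n"] n vs by (intro dist_le) auto
    also have "\<dots> \<le> enat (length vs - 1)" using n by simp
    finally show ?thesis using vs by (simp add: order_trans)
  next
    case False
    have p: "is_dpath N A (vs @ [i])"
      unfolding is_dpath_def
    proof (intro conjI allI impI)
      show "vs @ [i] \<noteq> []" by simp
      show "distinct (vs @ [i])" using vs False by (simp add: is_dpath_def)
      show "set (vs @ [i]) \<subseteq> {..<N}" using vs assms by (auto simp: is_dpath_def)
      fix k assume k: "Suc k < length (vs @ [i])"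
      show "arc A ((vs @ [i]) ! k) ((vs @ [i]) ! Suc k)"
      proof (cases "Suc k < length vs")
        case True thus ?thesis using vs k by (simp add: nth_append is_dpath_def)
      next
        case False
        hence "k = length vs - 1" "Suc k = length vs" using k vne by auto
        hence "(vs @ [i]) ! k = l" "(vs @ [i]) ! Suc k = i"
          using vs vne by (auto simp: nth_append last_conv_nth)
        thus ?thesis using assms by (simp add: arc_def)
      qed
    qed
    have "dist_path N A j i \<le> enat (length (vs @ [i]) - 1)"
      using p vs vne by (intro dist_le) auto
    thus ?thesis using vs vne by (simp add: one_enat_def)
  qed
qed

lemma dist_pred:
  assumes "dist_path N A j i = enat (Suc k)" "i < N"
  shows "\<exists>l<N. A i l > 0 \<and> dist_path N A j l = enat k"
proof -
  obtain vs where vs: "is_dpath N A vs" "hd vs = j" "last vs = i" "length vs - 1 = Suc k"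
    using dist_attain[of N A j i] assms by auto
  have len: "length vs = Suc (Suc k)" using vs by (simp add: is_dpath_def)
  define l where "l = vs ! k"
  have "l \<in> set vs" using len unfolding l_def by simp
  hence lN: "l < N" using vs unfolding is_dpath_def by auto
  have "arc A (vs ! k) (vs ! Suc k)" using vs len unfolding is_dpath_def by simp
  moreover have "vs ! Suc k = i"
  proof -
    have "last vs = vs ! (length vs - 1)" by (rule last_conv_nth) (use len in auto)
    thus ?thesis using vs len by simp
  qed
  ultimately have Ail: "A i l > 0" by (simp add: arc_def l_def)
  have le: "dist_path N A j l \<le> enat k"
    using dpath_take[OF vs(1), of "Suc k"] len vs dist_le[of N A "take (Suc k) vs" j l]
    by (simp add: l_def)
  have "dist_path N A j i \<le> dist_path N A j l + 1" by (rule dist_tri[of l N i A j, OF lN assms(2) Ail])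
  hence "enat (Suc k) \<le> dist_path N A j l + 1" using assms by simp
  hence "enat k \<le> dist_path N A j l"
    by (cases "dist_path N A j l") (auto simp: one_enat_def)
  thus ?thesis using le lN Ail by (intro exI[of _ l]) auto
qed


definition lapf :: "nat \<Rightarrow> (nat \<Rightarrow> nat \<Rightarrow> real) \<Rightarrow> nat \<Rightarrow> nat \<Rightarrow> real" where
  "lapf N A i l = (if i = l then (\<Sum>k<N. A i k) else 0) - A i l"

fun Lpow :: "nat \<Rightarrow> (nat \<Rightarrow> nat \<Rightarrow> real) \<Rightarrow> nat \<Rightarrow> nat \<Rightarrow> nat \<Rightarrow> real" where
  "Lpow N A 0 i j = (if i = j then 1 else 0)"
| "Lpow N A (Suc k) i j = (\<Sum>l<N. lapf N A i l * Lpow N A k l j)"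

lemma Lpow_main:
  assumes A_nonneg: "\<And>i j. i < N \<Longrightarrow> j < N \<Longrightarrow> A i j \<ge> 0"
    and A_noloop: "\<And>i. i < N \<Longrightarrow> A i i = 0"
    and j: "j < N"
  shows "\<forall>i<N. (enat k < dist_path N A j i \<longrightarrow> Lpow N A k i j = 0) \<and>
                (dist_path N A j i = enat k \<longrightarrow> (-1)^k * Lpow N A k i j > 0)"
proof (induction k)
  case 0
  show ?case using dist_zero[OF j, of A] by (auto simp: zero_enat_def[symmetric])
next
  case (Suc k)
  have IH1: "\<And>i. i < N \<Longrightarrow> enat k < dist_path N A j i \<Longrightarrow> Lpow N A k i j = 0"
    and IH2: "\<And>i. i < N \<Longrightarrow> dist_path N A j i = enat k \<Longrightarrow> (-1)^k * Lpow N A k i j > 0"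
    using Suc by auto
  show ?case
  proof (intro allI impI conjI)
    fix i assume i: "i < N"
    {
      fix l assume l: "l < N" "l \<noteq> i" "A i l > 0" "enat (Suc k) \<le> dist_path N A j i"
      have "dist_path N A j i \<le> dist_path N A j l + 1" by (rule dist_tri[of l N i A j, OF l(1) i l(3)])
      hence "enat (Suc k) \<le> dist_path N A j l + 1" using l(4) by (rule order_trans[rotated])
      hence "enat k \<le> dist_path N A j l"
        by (cases "dist_path N A j l") (auto simp: one_enat_def)
    } note lge = this
    {
      assume d: "enat (Suc k) < dist_path N A j i"
      have "Lpow N A (Suc k) i j = (\<Sum>l<N. 0)"
        unfolding Lpow.simps
      proof (rule sum.cong[OF refl])
        fix l assume l: "l \<in> {..<N}"
        show "lapf N A i l * Lpow N A k l j = 0"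
        proof (cases "l = i")
          case True
          have "enat k < dist_path N A j i" using d by (meson Suc_ile_eq less_imp_le order_le_less_trans) 
          thus ?thesis using IH1 i True by simp
        next
          case False
          show ?thesis
          proof (cases "A i l = 0")
            case True thus ?thesis using False by (simp add: lapf_def)
          next
            case nz: False
            hence pos: "A i l > 0" using A_nonneg[OF i, of l] l by simp
            have "dist_path N A j i \<le> dist_path N A j l + 1" by (rule dist_tri[of l N i A j]) (use l i pos in auto)
            hence "enat (Suc k) < dist_path N A j l + 1" using d by (rule order_less_le_trans[rotated])
            hence "enat k < dist_path N A j l"
              by (cases "dist_path N A j l") (auto simp: one_enat_def)
            thus ?thesis using IH1 l by simp
          qed
        qed
      qed
      thus "Lpow N A (Suc k) i j = 0" by simp
    }
    {
      assume d: "dist_path N A j i = enat (Suc k)"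
      obtain l0 where l0: "l0 < N" "A i l0 > 0" "dist_path N A j l0 = enat k"
        using dist_pred[OF d i] by blast
      have l0i: "l0 \<noteq> i" using l0 A_noloop[OF i] by auto
      define t where "t l = (-1)^Suc k * (lapf N A i l * Lpow N A k l j)" for l
      have tnn: "t l \<ge> 0" if l: "l \<in> {..<N}" for l
      proof (cases "l = i")
        case True
        have "enat k < dist_path N A j i" using d by simp
        thus ?thesis using IH1 i True by (simp add: t_def)
      next
        case False
        have t_eq: "t l = A i l * ((-1)^k * Lpow N A k l j)" using False by (simp add: t_def lapf_def)
        show ?thesis
        proof (cases "A i l = 0")
          case True thus ?thesis using t_eq by simp
        next
          case nz: False
          hence pos: "A i l > 0" using A_nonneg[OF i, of l] l by simp
          have "enat k \<le> dist_path N A j l" using lge[of l] l False pos d by simp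
          hence "enat k < dist_path N A j l \<or> dist_path N A j l = enat k" by auto
          thus ?thesis
          proof
            assume "enat k < dist_path N A j l" thus ?thesis using IH1 l t_eq by simp
          next
            assume "dist_path N A j l = enat k"
            hence "(-1)^k * Lpow N A k l j > 0" using IH2 l by simp
            thus ?thesis using t_eq pos by simp
          qed
        qed
      qed
      have "t l0 > 0"
      proof -
        have t_eq: "t l0 = A i l0 * ((-1)^k * Lpow N A k l0 j)" using l0i by (simp add: t_def lapf_def)
        thus ?thesis using IH2[OF l0(1) l0(3)] l0(2) by simp
      qed
      moreover have "t l0 \<le> sum t {..<N}" by (rule member_le_sum) (use tnn l0 in auto)
      ultimately have "sum t {..<N} > 0" by simp
      moreover have "sum t {..<N} = (-1)^Suc k * Lpow N A (Suc k) i j"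
        unfolding t_def Lpow.simps by (simp add: sum_distrib_left)
      ultimately show "(-1)^Suc k * Lpow N A (Suc k) i j > 0" by simp
    }
  qed
qed


lemma lap_entry: "i < N \<Longrightarrow> j < N \<Longrightarrow> laplacian N A $$ (i, j) = lapf N A i j"
  by (simp add: laplacian_def lapf_def)

lemma X_mult:
  fixes M :: ratfun
  assumes v: "v \<in> carrier_vec N" and i: "i < N"
  shows "((1\<^sub>m N + M \<cdot>\<^sub>m map_mat const_rf (laplacian N A)) *\<^sub>v v) $ i
         = v $ i + M * (\<Sum>l<N. const_rf (lapf N A i l) * v $ l)"
proof -
  have dims: "dim_row (laplacian N A) = N" "dim_col (laplacian N A) = N" by (simp_all add: laplacian_def)
  have "((1\<^sub>m N + M \<cdot>\<^sub>m map_mat const_rf (laplacian N A)) *\<^sub>v v) $ i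
      = (\<Sum>l\<in>{0..<N}. ((if i = l then 1 else 0) + M * const_rf (lapf N A i l)) * v $ l)"
    using v i dims by (auto simp: scalar_prod_def lap_entry intro!: sum.cong)
  also have "\<dots> = (\<Sum>l<N. (if i = l then v $ l else 0) + M * (const_rf (lapf N A i l) * v $ l))"
    by (rule sum.cong) (auto simp: atLeast0LessThan algebra_simps)
  also have "\<dots> = (\<Sum>l<N. (if i = l then v $ l else 0)) + M * (\<Sum>l<N. const_rf (lapf N A i l) * v $ l)"
    by (simp only: sum.distrib sum_distrib_left)
  also have "(\<Sum>l<N. (if i = l then v $ l else 0)) = v $ i" using i by (simp add: sum.delta)
  finally show ?thesis .
qed


theorem mainTheorem11:
  fixes N :: nat and A :: "nat \<Rightarrow> nat \<Rightarrow> real"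
    and a b p q :: "real poly" and S :: "nat set" and ov :: nat
  assumes A_nonneg: "\<And>i j. i < N \<Longrightarrow> j < N \<Longrightarrow> A i j \<ge> 0"
    and A_noloop: "\<And>i. i < N \<Longrightarrow> A i i = 0"
    and nz: "a \<noteq> 0" "b \<noteq> 0" "p \<noteq> 0" "q \<noteq> 0"
    and S_sub: "S \<subseteq> {..<N}" and S_ne: "S \<noteq> {}"
    and o_in: "ov < N"
    and reach: "\<exists>c\<in>S. dist_path N A c ov < \<infinity>"
    and proper: "degree (b * q) < degree (a * p)"
  shows "let M = Fract (b * q) (a * p);
             L = map_mat const_rf (laplacian N A);
             X = 1\<^sub>m N + M \<cdot>\<^sub>m L;
             u = vec N (\<lambda>i. if i \<in> S then 1 else 0);
             \<chi> = degree (a * p) - degree (b * q);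
             \<delta>min = Min ((\<lambda>c. dist_path N A c ov) ` S)
         in \<exists>Xi. mat_inverse X = Some Xi \<and>
               (let T = ((Xi *\<^sub>v (M \<cdot>\<^sub>v u)) $ ov)
                in T \<noteq> 0 \<and> rel_degree T = int ((the_enat \<delta>min + 1) * \<chi>))"
proof -
  define M where "M = Fract (b * q) (a * p)"
  define L where "L = map_mat const_rf (laplacian N A)"
  define X where "X = 1\<^sub>m N + M \<cdot>\<^sub>m L"
  define u :: "ratfun vec" where "u = vec N (\<lambda>i. if i \<in> S then 1 else 0)"
  define \<chi>n where "\<chi>n = degree (a * p) - degree (b * q)"
  define \<delta>min where "\<delta>min = Min ((\<lambda>c. dist_path N A c ov) ` S)"
  define \<chi> where "\<chi> = int \<chi>n"
  have bq: "b * q \<noteq> 0" and ap: "a * p \<noteq> 0" using nz by auto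
  have Mnz: "M \<noteq> 0" unfolding M_def using bq ap by (simp add: Fract_eq0)
  have Mdeg: "rel_degree M = \<chi>" unfolding M_def \<chi>_def \<chi>n_def using bq ap proper
    by (simp add: rel_degree_Fract of_nat_diff)
  have chi1: "\<chi> \<ge> 1" unfolding \<chi>_def \<chi>n_def using proper by simp
  have m1: "vge M 1" using Mdeg chi1 by (simp add: vge_def)
  have Xc: "X \<in> carrier_mat N N" unfolding X_def L_def by (simp add: laplacian_def)
  have Xmult: "(X *\<^sub>v v) $ i = v $ i + M * (\<Sum>l<N. const_rf (lapf N A i l) * v $ l)"
    if "v \<in> carrier_vec N" "i < N" for v i
    unfolding X_def L_def by (rule X_mult[OF that])
  have detX: "det X \<noteq> 0"
  proof
    assume "det X = 0"
    then obtain v where v: "v \<in> carrier_vec N" "v \<noteq> 0\<^sub>v N" "X *\<^sub>v v = 0\<^sub>v N"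
      using det_0_iff_vec_prod_zero_field[OF Xc] by blast
    have all: "\<forall>i<N. vge (v $ i) e" for e
    proof (rule bound[OF m1])
      show "vge (const_rf (lapf N A i l)) 0" for i l by (rule vge_const)
      show "vge ((0::ratfun)) e" for i :: nat by simp
      show "v $ i + M * (\<Sum>l<N. const_rf (lapf N A i l) * v $ l) = 0" if "i < N" for i
        using Xmult[OF v(1) that] v(3) that by simp
    qed
    have "v = 0\<^sub>v N"
    proof (rule eq_vecI)
      fix i assume i: "i < dim_vec (0\<^sub>v N :: ratfun vec)"
      hence iN: "i < N" by simp
      show "v $ i = 0\<^sub>v N $ i"
      proof (rule ccontr)
        assume "v $ i \<noteq> 0\<^sub>v N $ i"
        hence nz': "v $ i \<noteq> 0" using iN by simp
        have "vge (v $ i) (rel_degree (v $ i) + 1)" using all iN by blast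
        thus False using vge_nz[OF _ nz'] by fastforce
      qed
    qed (use v in simp)
    thus False using v by simp
  qed
  have "X \<in> Units (ring_mat TYPE(ratfun) N ())" by (rule det_non_zero_imp_unit[OF Xc detX])
  hence "mat_inverse X \<noteq> None" using mat_inverse(1)[OF Xc, of "()"] by blast
  then obtain Xi where Xi: "mat_inverse X = Some Xi" by blast
  from mat_inverse(2)[OF Xc Xi] have XXi: "X * Xi = 1\<^sub>m N" and Xic: "Xi \<in> carrier_mat N N" by auto
  define wv where "wv = Xi *\<^sub>v (M \<cdot>\<^sub>v u)"
  have uc: "M \<cdot>\<^sub>v u \<in> carrier_vec N" by (simp add: u_def)
  have wvc: "wv \<in> carrier_vec N" unfolding wv_def using Xic uc by simp
  have Xw: "X *\<^sub>v wv = M \<cdot>\<^sub>v u"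
    unfolding wv_def using assoc_mult_mat_vec[OF Xc Xic uc, symmetric] XXi uc by simp
  have finS: "finite S" using S_sub finite_subset by blast
  define z where "z k i = (\<Sum>c\<in>S. Lpow N A k i c)" for k i
  have zS: "z (Suc k) i = (\<Sum>l<N. lapf N A i l * z k l)" for k i
    unfolding z_def by (simp add: sum_distrib_left sum.swap[of _ S])
  have z0: "z 0 i = (if i \<in> S then 1 else 0)" for i
    unfolding z_def using finS by (simp add: sum.delta)
  have eqw: "wv $ i + M * (\<Sum>l<N. const_rf (lapf N A i l) * wv $ l) = M * const_rf (z 0 i)"
    if i: "i < N" for i
  proof -
    have "(X *\<^sub>v wv) $ i = M * const_rf (z 0 i)" unfolding Xw using i by (simp add: u_def z0)
    thus ?thesis using Xmult[OF wvc i] by simp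
  qed
  have fin_img: "finite ((\<lambda>c. dist_path N A c ov) ` S)" using finS by simp
  obtain c1 where c1: "c1 \<in> S" "dist_path N A c1 ov < \<infinity>" using reach by blast
  have "\<delta>min \<le> dist_path N A c1 ov" unfolding \<delta>min_def using fin_img c1 by simp
  hence "\<delta>min < \<infinity>" using c1(2) by (rule order.strict_trans1)
  hence "\<delta>min \<noteq> \<infinity>" by simp
  then obtain \<delta> where \<delta>: "\<delta>min = enat \<delta>" by (cases \<delta>min) auto
  have dge: "enat \<delta> \<le> dist_path N A c ov" if "c \<in> S" for c
    using \<delta> that fin_img unfolding \<delta>min_def by (metis Min_le imageI)
  have "\<delta>min \<in> (\<lambda>c. dist_path N A c ov) ` S" unfolding \<delta>min_def using fin_img S_ne by (intro Min_in) auto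
  then obtain c0 where c0: "c0 \<in> S" "dist_path N A c0 ov = enat \<delta>" using \<delta> by auto
  have cN: "c < N" if "c \<in> S" for c using S_sub that by auto
  have LM: "\<And>k. (enat k < dist_path N A c ov \<longrightarrow> Lpow N A k ov c = 0) \<and>
                (dist_path N A c ov = enat k \<longrightarrow> (-1)^k * Lpow N A k ov c > 0)" if "c \<in> S" for c
    using Lpow_main[of N A, OF A_nonneg A_noloop cN[OF that]] o_in by blast
  have zlow: "z k ov = 0" if "k < \<delta>" for k
    unfolding z_def
  proof (rule sum.neutral, intro ballI)
    fix c assume c: "c \<in> S"
    have "enat k < dist_path N A c ov" using dge[OF c] that by (meson enat_ord_simps(2) order_less_le_trans)
    thus "Lpow N A k ov c = 0" using LM[OF c] by blast
  qed
  have zpos: "(-1)^\<delta> * z \<delta> ov > 0"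
  proof -
    define t where "t c = (-1)^\<delta> * Lpow N A \<delta> ov c" for c
    have tnn: "t c \<ge> 0" if c: "c \<in> S" for c
    proof -
      have "enat \<delta> < dist_path N A c ov \<or> dist_path N A c ov = enat \<delta>" using dge[OF c] by auto
      thus ?thesis using LM[OF c, of \<delta>] unfolding t_def by auto
    qed
    have "t c0 > 0" using LM[OF c0(1), of \<delta>] c0 unfolding t_def by auto
    moreover have "t c0 \<le> sum t S" by (rule member_le_sum) (use tnn c0 finS in auto)
    moreover have "sum t S = (-1)^\<delta> * z \<delta> ov" unfolding t_def z_def by (simp add: sum_distrib_left)
    ultimately show ?thesis by simp
  qed
  hence znz: "z \<delta> ov \<noteq> 0" by auto
  have it: "\<forall>i<N. vge (wv $ i - (\<Sum>k<Suc \<delta>. (-1)^k * M^(k+1) * const_rf (z k i))) ((int (Suc \<delta>) + 1) * \<chi>)"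
    by (rule iter[where w = "\<lambda>i. wv $ i", OF Mnz Mdeg chi1 zS eqw])
  define g where "g = (-1)^\<delta> * M^(\<delta>+1) * const_rf (z \<delta> ov)"
  have sumg: "(\<Sum>k<Suc \<delta>. (-1)^k * M^(k+1) * const_rf (z k ov)) = g"
    unfolding g_def by (simp add: zlow)
  have gnz: "g \<noteq> 0" and gdeg: "rel_degree g = (int \<delta> + 1) * \<chi>"
  proof -
    have c: "const_rf (z \<delta> ov) \<noteq> 0 \<and> rel_degree (const_rf (z \<delta> ov)) = 0" by (rule rel_degree_const[OF znz])
    have pw: "M^(\<delta>+1) \<noteq> 0 \<and> rel_degree (M^(\<delta>+1)) = int (\<delta>+1) * \<chi>" using rel_degree_power[OF Mnz, of "\<delta>+1"] by (simp add: Mdeg)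
    have pr: "M^(\<delta>+1) * const_rf (z \<delta> ov) \<noteq> 0 \<and> rel_degree (M^(\<delta>+1) * const_rf (z \<delta> ov)) = int (\<delta>+1) * \<chi>"
      using rel_degree_mult[of "M^(\<delta>+1)" "const_rf (z \<delta> ov)"] c pw by simp
    show "g \<noteq> 0" unfolding g_def using pr by simp
    show "rel_degree g = (int \<delta> + 1) * \<chi>" unfolding g_def
      using pr rel_degree_sign[of \<delta> "M^(\<delta>+1) * const_rf (z \<delta> ov)"] by (simp add: mult.assoc)
  qed
  have "vge (wv $ ov - (\<Sum>k<Suc \<delta>. (-1)^k * M^(k+1) * const_rf (z k ov))) ((int (Suc \<delta>) + 1) * \<chi>)"
    using it o_in by blast
  hence R: "vge (wv $ ov - g) ((int (Suc \<delta>) + 1) * \<chi>)" unfolding sumg .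
  have "g + (wv $ ov - g) \<noteq> 0 \<and> rel_degree (g + (wv $ ov - g)) = rel_degree g"
    by (rule vge_strict[OF gnz R]) (use gdeg chi1 in \<open>simp add: algebra_simps\<close>)
  hence T: "wv $ ov \<noteq> 0" "rel_degree (wv $ ov) = (int \<delta> + 1) * \<chi>" using gdeg by auto
  have fin: "\<exists>Xi. mat_inverse X = Some Xi \<and> (Xi *\<^sub>v (M \<cdot>\<^sub>v u)) $ ov \<noteq> 0 \<and>
      rel_degree ((Xi *\<^sub>v (M \<cdot>\<^sub>v u)) $ ov) = int ((the_enat \<delta>min + 1) * \<chi>n)"
    using Xi T unfolding wv_def \<delta> \<chi>_def by (intro exI[of _ Xi]) (simp add: algebra_simps)
  show ?thesis using fin unfolding Let_def M_def L_def X_def u_def \<chi>n_def \<delta>min_def .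
qed

end
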